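(* Let $q$ be a prime power, $N$ a subgroup of $S_3$, and $\mathcal{L}\subseteq\mathbb{F}_q^3$ a subset invariant under the action of $N$, i.e. $\mathcal{L}^N=\mathcal{L}$. Suppose that each orbit of the action of $N\times K$ on $\mathcal{A}_q$ contains an element $u$ which can be written as $u=\lambda h+\mu e_j$ for some $h\in\mathcal{L}$, $\lambda,\mu\in\mathbb{F}_q$ and $j\in\{1,2,3\}$. Then $\mathcal{L}\cup\{(1,1,1)\}$ is a short covering of $\mathbb{F}_q^3$.
   Context: $\mathbb{F}_q$ is the finite field with $q$ elements; $e_1,e_2,e_3$ are the standard basis vectors of $\mathbb{F}_q^3$. Hamming distance $d(u,v)=|\{i:u_i\ne v_i\}|$; $B(u)=\{v:d(u,v)\le1\}$; $E(u)=\bigcup_{\lambda\in\mathbb{F}_q}B(\lambda u)$. A set $\mathcal{H}\subseteq\mathbb{F}_q^3$ is a short covering of $\mathbb{F}_q^3$ if $\bigcup_{h\in\mathcal{H}}E(h)=\mathbb{F}_q^3$. $S_3$ acts on $\mathbb{F}_q^3$ by permuting coordinates; $K=\{(u_1,u_2,u_3)\mapsto(\lambda u_1,\lambda u_2,\lambda u_3):\lambda\in\mathbb{F}_q^*\}$; these actions commute, giving an action of $N\times K$ on $\mathbb{F}_q^3$. $\mathcal{A}_q=\{(u_1,u_2,u_3)\in\mathbb{F}_q^3: u_1,u_2,u_3 \text{ pairwise distinct}\}$, which is invariant under $S_3\times K$. *)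

theory Defs
  imports "HOL-Analysis.Analysis" "HOL-Combinatorics.Permutations"
begin

text \<open>Vectors of F_q^3 are elements of type 'a^3 where 'a is a finite field.\<close>

definition hdist :: "'a^'n \<Rightarrow> 'a^'n \<Rightarrow> nat" where
  "hdist u v = card {i. u $ i \<noteq> v $ i}"

definition hball :: "'a^'n \<Rightarrow> ('a^'n) set" where
  "hball u = {v. hdist u v \<le> 1}"

definition Eset :: "('a::field)^'n \<Rightarrow> ('a^'n) set" where
  "Eset u = (\<Union>c. hball (c *s u))"

definition short_covering :: "(('a::field)^'n) set \<Rightarrow> bool" where
  "short_covering H \<longleftrightarrow> (\<Union>h\<in>H. Eset h) = UNIV"

definition std_e :: "'n \<Rightarrow> ('a::field)^'n" where
  "std_e j = (\<chi> i. if i = j then 1 else 0)"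

definition perm_act :: "('n \<Rightarrow> 'n) \<Rightarrow> 'a^'n \<Rightarrow> 'a^'n" where
  "perm_act \<sigma> u = (\<chi> i. u $ (inv \<sigma> i))"

definition sym_subgroup :: "(3 \<Rightarrow> 3) set \<Rightarrow> bool" where
  "sym_subgroup N \<longleftrightarrow> (\<forall>\<sigma>\<in>N. \<sigma> permutes (UNIV::3 set)) \<and> id \<in> N \<and>
     (\<forall>\<sigma>\<in>N. \<forall>\<tau>\<in>N. \<sigma> \<circ> \<tau> \<in> N) \<and> (\<forall>\<sigma>\<in>N. inv \<sigma> \<in> N)"

definition A_q :: "('a^3) set" where
  "A_q = {u. u $ 1 \<noteq> u $ 2 \<and> u $ 1 \<noteq> u $ 3 \<and> u $ 2 \<noteq> u $ 3}"

definition orbit_NK :: "(3 \<Rightarrow> 3) set \<Rightarrow> ('a::field)^3 \<Rightarrow> ('a^3) set" where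
  "orbit_NK N u = {c *s perm_act \<sigma> u | \<sigma> c. \<sigma> \<in> N \<and> c \<noteq> 0}"

end

theory Submission
  imports Defs
begin

lemma hball_sub:
  fixes x y :: "'a^'n::finite"
  assumes "{i. y $ i \<noteq> x $ i} \<subseteq> S" "card S \<le> 1" 
  shows "x \<in> hball y"
  using assms unfolding hball_def hdist_def
  by (meson card_mono finite le_trans mem_Collect_eq)

lemma Eset_I: "x \<in> hball (c *s u) \<Longrightarrow> x \<in> Eset u"
  unfolding Eset_def by blast

lemma nonA:
  fixes x :: "('a::field)^3"
  assumes "x \<notin> A_q"
  shows "x \<in> Eset ((\<chi> i. 1) :: 'a^3)"
proof -
  obtain a b :: 3 where ab: "a \<noteq> b" "x $ a = x $ b"
  proof -
    have d12: "(1::3) \<noteq> 2" and d13: "(1::3) \<noteq> 3" and d23: "(2::3) \<noteq> 3" by simp_all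
    show ?thesis using assms d12 d13 d23 that unfolding A_q_def by blast
  qed
  have "{i. (x $ a *s (\<chi> i. (1::'a))) $ i \<noteq> x $ i} \<subseteq> UNIV - {a,b}"
    using ab by auto
  moreover have "card (UNIV - {a,b::3}) \<le> 1"
    using ab by (simp add: card_Diff_subset)
  ultimately show ?thesis by (intro Eset_I[of _ "x $ a"] hball_sub) auto
qed

theorem theorem22:
  fixes N :: "(3 \<Rightarrow> 3) set" and L :: "('a::{finite,field}^3) set"
  assumes "sym_subgroup N"
    and "\<forall>\<sigma>\<in>N. perm_act \<sigma> ` L = L"
    and "\<forall>u\<in>A_q. \<exists>v\<in>orbit_NK N u. \<exists>h\<in>L. \<exists>c d. \<exists>j::3. v = c *s h + d *s std_e j"
  shows "short_covering (L \<union> {(\<chi> i. 1)})"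
  unfolding short_covering_def
proof (rule set_eqI, rule iffI)
  fix x :: "'a^3"
  show "x \<in> (\<Union>h\<in>L \<union> {(\<chi> i. 1)}. Eset h)"
  proof (cases "x \<in> A_q")
    case False
    then show ?thesis using nonA by blast
  next
    case True
    then obtain v h c' d j where v: "v \<in> orbit_NK N x" and h: "h \<in> L"
      and vd: "v = c' *s h + d *s std_e j" using assms(3) by blast
    then obtain \<sigma> c where s: "\<sigma> \<in> N" "c \<noteq> 0" and vx: "v = c *s perm_act \<sigma> x"
      unfolding orbit_NK_def by blast
    have perm: "\<sigma> permutes UNIV" using s assms(1) unfolding sym_subgroup_def by blast
    have invN: "inv \<sigma> \<in> N" using s assms(1) unfolding sym_subgroup_def by blast
    define w where "w = perm_act (inv \<sigma>) h"
    have wL: "w \<in> L" using assms(2) invN h unfolding w_def by blast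
    have w: "w $ k = h $ (\<sigma> k)" for k
      unfolding w_def perm_act_def using perm by (simp add: permutes_inv_inv)
    have xk: "x $ k = inverse c * v $ (\<sigma> k)" for k
      using s perm unfolding vx perm_act_def by (simp add: permutes_inverses)
    have "{i. ((inverse c * c') *s w) $ i \<noteq> x $ i} \<subseteq> {inv \<sigma> j}"
    proof
      fix i assume "i \<in> {i. ((inverse c * c') *s w) $ i \<noteq> x $ i}"
      then have "\<sigma> i = j" using s(2)
        by (auto simp: xk w vd std_e_def algebra_simps split: if_splits)
      then show "i \<in> {inv \<sigma> j}" using perm by (auto simp: permutes_inverses)
    qed
    then have "x \<in> hball ((inverse c * c') *s w)" by (rule hball_sub) simp
    then have "x \<in> Eset w" by (rule Eset_I)
    then show ?thesis using wL by blast
  qed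
qed simp

end
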